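(* Let $(Z,d)$ be an infinite compact metric space and $\Gamma$ a regular approximation graph for $Z$ with refining sequence $(\mathcal V_n)_{n\ge0}$. Then $$\mathcal I_\Gamma=\pi_\Gamma^{-1}\Big(\bigcap_{n\in\mathbb N}\bigcup\mathcal V_n^{\mathrm{ess}}\Big).$$
   Context: A refining sequence is a sequence $(\mathcal V_n)_{n\ge0}$ of finite covers of $Z$, all open or all closed with nonempty interiors, with $\mathcal V_0=\{Z\}$, each element of $\mathcal V_{n+1}$ contained in some element of $\mathcal V_n$, and $\max_{v\in\mathcal V_n}\operatorname{diam}v\to0$. Its approximation graph $\Gamma$ has vertices $\coprod_n\mathcal V_n$ and an edge from $v_n\in\mathcal V_n$ to $v_{n+1}\in\mathcal V_{n+1}$ whenever $v_{n+1}\subset v_n$. The infinite path space $\mathcal P_\Gamma$ is the set of sequences of edges $(p_n)_{n\ge0}$, $p_n$ from some $v_n\in\mathcal V_n$ to some $v_{n+1}\in\mathcal V_{n+1}$, consecutive edges sharing their common vertex; it carries the compact topology generated by cylinder sets (paths with prescribed first finitely many edges). Writing $r(p_n)=v_{n+1}$, the map $\pi_\Gamma:\mathcal P_\Gamma\to Z$ is $\pi_\Gamma(\tilde p)=$ the unique point of $\bigcap_{n\ge0}\operatorname{cl}(r(p_n))$; it is continuous and surjective. $\mathcal I_\Gamma=\{\tilde p\in\mathcal P_\Gamma:\#\pi_\Gamma^{-1}(\pi_\Gamma(\tilde p))=1\}$. The overlapping set is $\mathcal Y_n=\{\operatorname{cl}(v)\cap\operatorname{cl}(w):v\ne w\in\mathcal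 V_n\}$, and $v^{\mathrm{ess}}=\operatorname{int}(v)\setminus\bigcup\mathcal Y_n$ for $v\in\mathcal V_n$, $\mathcal V_n^{\mathrm{ess}}=\{v^{\mathrm{ess}}:v\in\mathcal V_n\}$. $\Gamma$ is regular if for every $n\in\mathbb N$ and $v\in\mathcal V_n$: $v=\bigcup\{w\in\mathcal V_{n+1}:w\subset v\}$ and $v^{\mathrm{ess}}\ne\varnothing$. *)

theory Defs
  imports "HOL-Analysis.Analysis"
begin

text \<open>The compact metric space Z is the whole type 'a (so open, closed, interior,
 closure are the topology of Z). A refining sequence is V :: nat => 'a set set.\<close>

definition refining_sequence :: "(nat \<Rightarrow> 'a::metric_space set set) \<Rightarrow> bool" where
  "refining_sequence V \<longleftrightarrow>
     (\<forall>n. finite (V n) \<and> \<Union>(V n) = UNIV) \<and>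
     ((\<forall>n. \<forall>v\<in>V n. open v) \<or> (\<forall>n. \<forall>v\<in>V n. closed v \<and> interior v \<noteq> {})) \<and>
     V 0 = {UNIV} \<and>
     (\<forall>n. \<forall>w\<in>V (Suc n). \<exists>v\<in>V n. w \<subseteq> v) \<and>
     (\<lambda>n. Max (diameter ` V n)) \<longlonglongrightarrow> 0"

text \<open>Vertices of the approximation graph at level n are the elements of V n; an edge
 from level n to level n+1 is a pair (v, w) with v in V n, w in V (n+1), w a subset of v.\<close>

definition is_edge :: "(nat \<Rightarrow> 'a set set) \<Rightarrow> nat \<Rightarrow> 'a set \<times> 'a set \<Rightarrow> bool" where
  "is_edge V n e \<longleftrightarrow> fst e \<in> V n \<and> snd e \<in> V (Suc n) \<and> snd e \<subseteq> fst e"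

definition path_space :: "(nat \<Rightarrow> 'a set set) \<Rightarrow> (nat \<Rightarrow> 'a set \<times> 'a set) set" where
  "path_space V = {p. (\<forall>n. is_edge V n (p n)) \<and> (\<forall>n. snd (p n) = fst (p (Suc n)))}"

definition path_proj :: "(nat \<Rightarrow> 'a::topological_space set \<times> 'a set) \<Rightarrow> 'a" where
  "path_proj p = (THE z. z \<in> (\<Inter>n. closure (snd (p n))))"

definition injectivity_set :: "(nat \<Rightarrow> 'a::topological_space set set) \<Rightarrow> (nat \<Rightarrow> 'a set \<times> 'a set) set" where
  "injectivity_set V = {p \<in> path_space V.
      card {q \<in> path_space V. path_proj q = path_proj p} = 1}"

definition overlapping_set :: "(nat \<Rightarrow> 'a::topological_space set set) \<Rightarrow> nat \<Rightarrow> 'a set set" where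
  "overlapping_set V n = {closure v \<inter> closure w | v w. v \<in> V n \<and> w \<in> V n \<and> v \<noteq> w}"

definition ess :: "(nat \<Rightarrow> 'a::topological_space set set) \<Rightarrow> nat \<Rightarrow> 'a set \<Rightarrow> 'a set" where
  "ess V n v = interior v - \<Union>(overlapping_set V n)"

definition regular_graph :: "(nat \<Rightarrow> 'a::topological_space set set) \<Rightarrow> bool" where
  "regular_graph V \<longleftrightarrow>
     (\<forall>n. \<forall>v\<in>V n. v = \<Union>{w \<in> V (Suc n). w \<subseteq> v} \<and> ess V n v \<noteq> {})"

end

theory Submission
  imports Defs
begin

lemma closure_Union_fin:
  "finite A \<Longrightarrow> closure (\<Union>A) = \<Union>(closure ` A)"
  by (induction A rule: finite_induct) auto

lemma path_nested:
  assumes "q \<in> path_space V" "m \<le> n"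
  shows "snd (q n) \<subseteq> snd (q m)"
  using assms(2)
proof (induction n)
  case 0 then show ?case by simp
next
  case (Suc n)
  have "snd (q (Suc n)) \<subseteq> fst (q (Suc n))" "fst (q (Suc n)) = snd (q n)"
    using assms(1) unfolding path_space_def is_edge_def by auto
  then show ?case using Suc by (cases "m = Suc n") auto
qed

lemma regular_nonempty:
  assumes "regular_graph V" "v \<in> V n"
  shows "v \<noteq> {}"
  using assms unfolding regular_graph_def ess_def by fastforce

lemma proj_exists:
  fixes V :: "nat \<Rightarrow> 'a::metric_space set set"
  assumes cpt: "compact (UNIV :: 'a set)" and reg: "regular_graph V"
    and q: "q \<in> path_space V"
  shows "\<exists>z. \<forall>n. z \<in> closure (snd (q n))"
proof -
  define C where "C n = closure (snd (q n))" for n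
  have ne: "C n \<noteq> {}" for n
  proof -
    have "snd (q n) \<in> V (Suc n)" using q unfolding path_space_def is_edge_def by auto
    then show ?thesis using regular_nonempty[OF reg] unfolding C_def by auto
  qed
  have mono: "m \<le> n \<Longrightarrow> C n \<subseteq> C m" for m n
    unfolding C_def by (intro closure_mono path_nested[OF q])
  have "UNIV \<inter> \<Inter>(range C) \<noteq> {}"
  proof (rule compact_imp_fip[OF cpt])
    show "\<And>T. T \<in> range C \<Longrightarrow> closed T" unfolding C_def by auto
  next
    fix F' assume F': "finite F'" "F' \<subseteq> range C"
    then obtain I where I: "finite I" "F' = C ` I" by (meson finite_subset_image)
    show "UNIV \<inter> \<Inter>F' \<noteq> {}"
    proof (cases "I = {}")
      case True then show ?thesis using I by auto
    next
      case False
      have "C (Max I) \<subseteq> C i" if "i \<in> I" for i using mono Max_ge[OF I(1) that] by blast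
      then have "C (Max I) \<subseteq> \<Inter>F'" using I by auto
      then show ?thesis using ne[of "Max I"] by auto
    qed
  qed
  then show ?thesis unfolding C_def by auto
qed

lemma proj_unique:
  fixes V :: "nat \<Rightarrow> 'a::metric_space set set"
  assumes cpt: "compact (UNIV :: 'a set)" and rs: "refining_sequence V"
    and q: "q \<in> path_space V"
    and x: "\<forall>n. x \<in> closure (snd (q n))" and y: "\<forall>n. y \<in> closure (snd (q n))"
  shows "x = y"
proof -
  have bdd: "bounded (S :: 'a set)" for S
    using compact_imp_bounded[OF cpt] bounded_subset by blast
  have fin: "finite (V n)" for n using rs unfolding refining_sequence_def by auto
  have lim: "(\<lambda>n. Max (diameter ` V n)) \<longlonglongrightarrow> 0" using rs unfolding refining_sequence_def by auto
  have le: "dist x y \<le> Max (diameter ` V (Suc n))" for n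
  proof -
    have mem: "snd (q n) \<in> V (Suc n)" using q unfolding path_space_def is_edge_def by auto
    have "dist x y \<le> diameter (closure (snd (q n)))"
      using diameter_bounded_bound[OF bdd] x y by blast
    also have "\<dots> = diameter (snd (q n))" using diameter_closure[OF bdd] .
    also have "\<dots> \<le> Max (diameter ` V (Suc n))" using mem fin by (intro Max_ge) auto
    finally show ?thesis .
  qed
  have "(\<lambda>n. Max (diameter ` V (Suc n))) \<longlonglongrightarrow> 0" using LIMSEQ_Suc[OF lim] .
  then have "dist x y \<le> 0" using le by (meson LIMSEQ_le_const)
  then show ?thesis by simp
qed

lemma proj_mem:
  fixes V :: "nat \<Rightarrow> 'a::metric_space set set"
  assumes cpt: "compact (UNIV :: 'a set)" and rs: "refining_sequence V" and reg: "regular_graph V"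
    and q: "q \<in> path_space V"
  shows "path_proj q \<in> closure (snd (q n))"
proof -
  obtain z where z: "\<forall>n. z \<in> closure (snd (q n))" using proj_exists[OF cpt reg q] by blast
  have "path_proj q = z" unfolding path_proj_def
    using z proj_unique[OF cpt rs q] by (intro the_equality) auto
  then show ?thesis using z by simp
qed

lemma proj_eq:
  fixes V :: "nat \<Rightarrow> 'a::metric_space set set"
  assumes cpt: "compact (UNIV :: 'a set)" and rs: "refining_sequence V"
    and q: "q \<in> path_space V"
    and z: "\<forall>n. z \<in> closure (snd (q n))"
  shows "path_proj q = z"
  unfolding path_proj_def
  using z proj_unique[OF cpt rs q] by (intro the_equality) auto

lemma rs_parts:
  assumes "refining_sequence V"
  shows "finite (V n)" "\<Union>(V n) = UNIV" "V 0 = {UNIV}"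
proof -
  have "(\<forall>n. finite (V n) \<and> \<Union>(V n) = UNIV) \<and> V 0 = {UNIV}"
    using assms unfolding refining_sequence_def by (elim conjE) (rule conjI; assumption)
  then show "finite (V n)" "\<Union>(V n) = UNIV" "V 0 = {UNIV}" by blast+
qed

lemma rs_parent:
  assumes "refining_sequence V" "w \<in> V (Suc n)"
  shows "\<exists>v\<in>V n. w \<subseteq> v"
proof -
  have "\<forall>n. \<forall>w\<in>V (Suc n). \<exists>v\<in>V n. w \<subseteq> v"
    using assms(1) unfolding refining_sequence_def by (elim conjE)
  then show ?thesis using assms(2) by blast
qed

lemma backward_chain:
  assumes rs: "refining_sequence V"
  shows "v \<in> V m \<Longrightarrow> \<exists>s. (\<forall>k\<le>m. s k \<in> V k) \<and> (\<forall>k<m. s (Suc k) \<subseteq> s k) \<and> s m = v"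
proof (induction m arbitrary: v)
  case 0
  then show ?case by (intro exI[of _ "\<lambda>_. v"]) auto
next
  case (Suc m)
  obtain u where u: "u \<in> V m" "v \<subseteq> u" using rs_parent[OF rs Suc.prems] by blast
  obtain s where s: "\<forall>k\<le>m. s k \<in> V k" "\<forall>k<m. s (Suc k) \<subseteq> s k" "s m = u"
    using Suc.IH[OF u(1)] by blast
  define s' where "s' = s(Suc m := v)"
  have 1: "\<forall>k\<le>Suc m. s' k \<in> V k"
  proof (intro allI impI)
    fix k assume "k \<le> Suc m"
    then consider "k = Suc m" | "k \<le> m" by linarith
    then show "s' k \<in> V k"
      by cases (use s Suc.prems in \<open>simp_all add: s'_def\<close>)
  qed
  have 2: "\<forall>k<Suc m. s' (Suc k) \<subseteq> s' k"
  proof (intro allI impI)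
    fix k assume "k < Suc m"
    then consider "k = m" | "k < m" by linarith
    then show "s' (Suc k) \<subseteq> s' k"
      by cases (use s u in \<open>simp_all add: s'_def\<close>)
  qed
  have 3: "s' (Suc m) = v" by (simp add: s'_def)
  show ?case using 1 2 3 by blast
qed

lemma backward_chain_mono:
  assumes "\<forall>k<m. s (Suc k) \<subseteq> s k"
  shows "k \<le> m \<Longrightarrow> s m \<subseteq> s k"
  using assms
proof (induction m)
  case 0 then show ?case by simp
next
  case (Suc m)
  then show ?case by (cases "k = Suc m") auto
qed

lemma forward_chain:
  fixes V :: "nat \<Rightarrow> 'a::metric_space set set"
  assumes rs: "refining_sequence V" and reg: "regular_graph V"
    and v: "v \<in> V m" and z: "z \<in> closure v"
  shows "\<exists>t. \<forall>j. (t j \<in> V (m + j) \<and> z \<in> closure (t j) \<and> (j = 0 \<longrightarrow> t j = v)) \<and> t (Suc j) \<subseteq> t j"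
proof -
  have fin: "finite (V n)" for n using rs unfolding refining_sequence_def by auto
  have child: "\<exists>w. w \<in> V (Suc n) \<and> w \<subseteq> u \<and> z \<in> closure w" if uV: "u \<in> V n" and zu: "z \<in> closure u" for u n
  proof -
    have eq: "u = \<Union>{w \<in> V (Suc n). w \<subseteq> u}" using reg uV unfolding regular_graph_def by blast
    have "finite {w \<in> V (Suc n). w \<subseteq> u}" using fin by auto
    then have "closure u = \<Union>(closure ` {w \<in> V (Suc n). w \<subseteq> u})"
      using arg_cong[of _ _ closure, OF eq] closure_Union_fin by metis
    then obtain w where "w \<in> {w \<in> V (Suc n). w \<subseteq> u}" "z \<in> closure w" using zu by blast
    then show ?thesis by blast
  qed
  show ?thesis
  proof (rule dependent_nat_choice[where P="\<lambda>j x. x \<in> V (m + j) \<and> z \<in> closure x \<and> (j = 0 \<longrightarrow> x = v)"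
          and Q="\<lambda>j x y. y \<subseteq> x"])
    show "\<exists>x. x \<in> V (m + 0) \<and> z \<in> closure x \<and> (0 = 0 \<longrightarrow> x = v)" using v z by simp
  next
    fix x j assume "x \<in> V (m + j) \<and> z \<in> closure x \<and> (j = 0 \<longrightarrow> x = v)"
    then obtain y where "y \<in> V (Suc (m + j))" "y \<subseteq> x" "z \<in> closure y" using child by blast
    then show "\<exists>y. (y \<in> V (m + Suc j) \<and> z \<in> closure y \<and> (Suc j = 0 \<longrightarrow> y = v)) \<and> y \<subseteq> x"
      by auto
  qed
qed

lemma path_through:
  fixes V :: "nat \<Rightarrow> 'a::metric_space set set"
  assumes cpt: "compact (UNIV :: 'a set)" and rs: "refining_sequence V" and reg: "regular_graph V"
    and v: "v \<in> V m" and z: "z \<in> closure v"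
  shows "\<exists>q\<in>path_space V. path_proj q = z \<and> fst (q m) = v"
proof -
  obtain s where s: "\<forall>k\<le>m. s k \<in> V k" "\<forall>k<m. s (Suc k) \<subseteq> s k" "s m = v"
    using backward_chain[OF rs v] by blast
  obtain t where t: "\<And>j. t j \<in> V (m + j)" "\<And>j. z \<in> closure (t j)" "t 0 = v" "\<And>j. t (Suc j) \<subseteq> t j"
    using forward_chain[OF rs reg v z] by blast
  define r where "r k = (if k \<le> m then s k else t (k - m))" for k
  have rV: "r k \<in> V k" for k
  proof (cases "k \<le> m")
    case True then show ?thesis using s unfolding r_def by auto
  next
    case False
    then have "m + (k - m) = k" by simp
    then show ?thesis using False t(1)[of "k - m"] unfolding r_def by simp
  qed
  have rz: "z \<in> closure (r k)" for k
  proof (cases "k \<le> m")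
    case True
    then have "v \<subseteq> s k" using backward_chain_mono[OF s(2)] s(3) by blast
    then have "closure v \<subseteq> closure (s k)" by (rule closure_mono)
    then show ?thesis using z True unfolding r_def by auto
  next
    case False then show ?thesis using t(2)[of "k - m"] unfolding r_def by simp
  qed
  have rsub: "r (Suc k) \<subseteq> r k" for k
  proof -
    consider "Suc k \<le> m" | "k = m" | "k > m" by linarith
    then show ?thesis
    proof cases
      case 1
      then have "s (Suc k) \<subseteq> s k" using s(2) by simp
      then show ?thesis using 1 unfolding r_def by simp
    next
      case 2 then show ?thesis using t(4)[of 0] t(3) s(3) unfolding r_def by simp
    next
      case 3
      then have "Suc k - m = Suc (k - m)" by auto
      then show ?thesis using 3 t(4)[of "k - m"] unfolding r_def by simp
    qed
  qed
  define q where "q k = (r k, r (Suc k))" for k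
  have qP: "q \<in> path_space V"
    unfolding path_space_def is_edge_def q_def using rV rsub by simp
  have "path_proj q = z" using proj_eq[OF cpt rs qP] rz unfolding q_def by simp
  moreover have "fst (q m) = v" unfolding q_def r_def using s(3) by simp
  ultimately show ?thesis using qP by blast
qed

lemma ess_unique:
  assumes "z \<in> ess V n v" "v \<in> V n" "w \<in> V n" "z \<in> closure w"
  shows "w = v"
proof (rule ccontr)
  assume wv: "w \<noteq> v"
  have zi: "z \<in> interior v" and zn: "z \<notin> \<Union>(overlapping_set V n)"
    using assms(1) unfolding ess_def by simp_all
  have "z \<in> v" using interior_subset zi by (rule subsetD)
  then have zc: "z \<in> closure v" using closure_subset[of v] by blast
  have "\<exists>a b. closure w \<inter> closure v = closure a \<inter> closure b \<and> a \<in> V n \<and> b \<in> V n \<and> a \<noteq> b"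
    using assms(2,3) wv by blast
  then have "closure w \<inter> closure v \<in> overlapping_set V n"
    unfolding overlapping_set_def by simp
  moreover have "z \<in> closure w \<inter> closure v" using assms(4) zc by simp
  ultimately show False using zn by blast
qed

lemma inj_singleton:
  assumes pI: "p \<in> injectivity_set V"
  shows "\<exists>x. {q \<in> path_space V. path_proj q = path_proj p} = {x}"
proof -
  have "card {q \<in> path_space V. path_proj q = path_proj p} = 1"
    using pI unfolding injectivity_set_def mem_Collect_eq by (rule conjunct2)
  then show ?thesis by (rule card_1_singletonE) blast
qed

theorem proposition2p22:
  fixes V :: "nat \<Rightarrow> 'a::metric_space set set"
  assumes "compact (UNIV :: 'a set)"
    and "infinite (UNIV :: 'a set)"
    and "refining_sequence V"
    and "regular_graph V"
  shows "injectivity_set V =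
           {p \<in> path_space V. path_proj p \<in> (\<Inter>n. \<Union>v\<in>V n. ess V n v)}"
proof -
  note cpt = assms(1) and rs = assms(3) and reg = assms(4)
  have fin: "finite (V n)" for n by (rule rs_parts(1)[OF rs])
  have cov: "\<Union>(V n) = UNIV" for n by (rule rs_parts(2)[OF rs])
  have V0: "V 0 = {UNIV}" by (rule rs_parts(3)[OF rs])
  have cov': "\<exists>v\<in>V n. y \<in> v" for n y
  proof -
    have "y \<in> \<Union>(V n)" by (simp add: cov)
    then show ?thesis by blast
  qed
  have A: "p \<in> {p \<in> path_space V. path_proj p \<in> (\<Inter>n. \<Union>v\<in>V n. ess V n v)}"
    if pI: "p \<in> injectivity_set V" for p
  proof -
    from pI have pP: "p \<in> path_space V" unfolding injectivity_set_def mem_Collect_eq by (rule conjunct1)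
    from inj_singleton[OF pI] obtain x where x: "{q \<in> path_space V. path_proj q = path_proj p} = {x}" ..
    define z where "z = path_proj p"
    have "z \<in> (\<Union>v\<in>V n. ess V n v)" for n
    proof (rule ccontr)
      assume nz: "z \<notin> (\<Union>v\<in>V n. ess V n v)"
      obtain v where v: "v \<in> V n" "z \<in> v" using cov'[of n z] by blast
      have "\<exists>a\<in>V n. \<exists>b\<in>V n. a \<noteq> b \<and> z \<in> closure a \<and> z \<in> closure b"
      proof (cases "z \<in> \<Union>(overlapping_set V n)")
        case True then show ?thesis unfolding overlapping_set_def by blast
      next
        case False
        then have "z \<notin> interior v" using nz v unfolding ess_def by blast
        then have "z \<in> closure (- v)" by (simp add: closure_interior)
        moreover have "- v \<subseteq> \<Union>(V n - {v})" using cov'[of n] by blast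
        ultimately have "z \<in> closure (\<Union>(V n - {v}))" using closure_mono by blast
        then have "z \<in> \<Union>(closure ` (V n - {v}))" using fin[of n] by (simp add: closure_Union_fin)
        then show ?thesis using v closure_subset by blast
      qed
      then obtain a b where ab: "a \<in> V n" "b \<in> V n" "a \<noteq> b" "z \<in> closure a" "z \<in> closure b" by blast
      obtain qa where qa: "qa \<in> path_space V" "path_proj qa = z" "fst (qa n) = a"
        using path_through[OF cpt rs reg ab(1) ab(4)] by blast
      obtain qb where qb: "qb \<in> path_space V" "path_proj qb = z" "fst (qb n) = b"
        using path_through[OF cpt rs reg ab(2) ab(5)] by blast
      have "qa \<in> {q \<in> path_space V. path_proj q = path_proj p}" using qa z_def by simp
      then have "qa = x" using x by simp
      have "qb \<in> {q \<in> path_space V. path_proj q = path_proj p}" using qb z_def by simp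
      then have "qb = x" using x by simp
      then show False using \<open>qa = x\<close> qa(3) qb(3) ab(3) by simp
    qed
    then have "path_proj p \<in> (\<Inter>n. \<Union>v\<in>V n. ess V n v)" unfolding z_def by blast
    then show ?thesis using pP by simp
  qed
  have B: "p \<in> injectivity_set V"
    if pR: "p \<in> {p \<in> path_space V. path_proj p \<in> (\<Inter>n. \<Union>v\<in>V n. ess V n v)}" for p
  proof -
    from pR have pP: "p \<in> path_space V" and pz: "\<And>n. path_proj p \<in> (\<Union>v\<in>V n. ess V n v)" by auto
    have "{q \<in> path_space V. path_proj q = path_proj p} = {p}"
    proof (intro equalityI subsetI)
      fix q assume "q \<in> {q \<in> path_space V. path_proj q = path_proj p}"
      then have qP: "q \<in> path_space V" and qz: "path_proj q = path_proj p" by auto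
      have sndeq: "snd (q n) = snd (p n)" for n
      proof -
        obtain v where v: "v \<in> V (Suc n)" "path_proj p \<in> ess V (Suc n) v" using pz[of "Suc n"] by blast
        have "snd (q n) \<in> V (Suc n)" "snd (p n) \<in> V (Suc n)"
          using qP pP unfolding path_space_def is_edge_def by auto
        moreover have "path_proj p \<in> closure (snd (q n))" "path_proj p \<in> closure (snd (p n))"
          using proj_mem[OF cpt rs reg qP, of n] proj_mem[OF cpt rs reg pP, of n] qz by auto
        ultimately show ?thesis using ess_unique[OF v(2) v(1)] by metis
      qed
      have fsteq: "fst (q n) = fst (p n)" for n
      proof (cases n)
        case 0
        have "fst (q 0) \<in> V 0" "fst (p 0) \<in> V 0"
          using qP pP unfolding path_space_def is_edge_def by auto
        then show ?thesis using 0 V0 by simp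
      next
        case (Suc k)
        then show ?thesis using qP pP sndeq[of k] unfolding path_space_def by auto
      qed
      show "q \<in> {p}" using sndeq fsteq by (simp add: prod_eq_iff fun_eq_iff)
    qed (use pP in auto)
    then have "card {q \<in> path_space V. path_proj q = path_proj p} = 1" by simp
    then show ?thesis unfolding injectivity_set_def using pP by simp
  qed
  show ?thesis
  proof (rule set_eqI)
    fix p
    show "p \<in> injectivity_set V \<longleftrightarrow> p \<in> {p \<in> path_space V. path_proj p \<in> (\<Inter>n. \<Union>v\<in>V n. ess V n v)}"
      using A[of p] B[of p] by (rule iffI)
  qed
qed

end
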